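(* Let $\mathcal O$ be a complete discrete valuation ring of characteristic zero with residue field of characteristic $p>0$. Let $\Lambda$ be an $\mathcal O$-order, $G$ a finite group and $\Gamma$ an $\mathcal O$-linear crossed product of $\Lambda$ and $G$. If $e\in\Lambda$ is an idempotent such that $e\Lambda\cong\alpha(e)\Lambda$ as right $\Lambda$-modules for every $\alpha\in\operatorname{Aut}_{\mathcal O}(\Lambda)$, then $e\Gamma e$ is an $\mathcal O$-linear crossed product of $e\Lambda e$ and $G$.
   Context: An $\mathcal O$-order is an $\mathcal O$-algebra free and finitely generated as an $\mathcal O$-module. A crossed product of a ring $R$ and $G$ is a $G$-graded ring $A=\bigoplus_{g\in G}A_g$ with $A_1=R$ such that each $A_g$ contains a unit of $A$; it is $\mathcal O$-linear if $R$ is an $\mathcal O$-algebra and the image of $\mathcal O$ under $R\hookrightarrow A$ lies in the centre of $A$. Here $e\Gamma e$ is graded by $(e\Gamma e)_g=e\Gamma_g e$. *)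

theory Defs
  imports "HOL-Algebra.Algebra"
begin

definition DVR :: "('o, 'p) ring_scheme \<Rightarrow> bool" where
  "DVR \<O> \<longleftrightarrow> principal_domain \<O> \<and> (\<exists>!P. primeideal P \<O> \<and> P \<noteq> {\<zero>\<^bsub>\<O>\<^esub>})"

definition dvr_max_ideal :: "('o, 'p) ring_scheme \<Rightarrow> 'o set" where
  "dvr_max_ideal \<O> = (THE P. primeideal P \<O> \<and> P \<noteq> {\<zero>\<^bsub>\<O>\<^esub>})"

definition ideal_power :: "('o, 'p) ring_scheme \<Rightarrow> 'o set \<Rightarrow> nat \<Rightarrow> 'o set" where
  "ideal_power \<O> I n = ((ideal_prod \<O> I) ^^ n) (carrier \<O>)"

definition adically_complete :: "('o, 'p) ring_scheme \<Rightarrow> 'o set \<Rightarrow> bool" where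
  "adically_complete \<O> m \<longleftrightarrow>
     (\<forall>x::nat \<Rightarrow> 'o. range x \<subseteq> carrier \<O> \<longrightarrow>
        (\<forall>n. \<exists>N. \<forall>i\<ge>N. \<forall>j\<ge>N. x i \<ominus>\<^bsub>\<O>\<^esub> x j \<in> ideal_power \<O> m n) \<longrightarrow>
        (\<exists>y\<in>carrier \<O>. \<forall>n. \<exists>N. \<forall>i\<ge>N. x i \<ominus>\<^bsub>\<O>\<^esub> y \<in> ideal_power \<O> m n))"

definition complete_DVR :: "('o, 'p) ring_scheme \<Rightarrow> bool" where
  "complete_DVR \<O> \<longleftrightarrow> DVR \<O> \<and> adically_complete \<O> (dvr_max_ideal \<O>)"

definition char_zero_ring :: "('o, 'p) ring_scheme \<Rightarrow> bool" where
  "char_zero_ring \<O> \<longleftrightarrow> (\<forall>n::nat. n > 0 \<longrightarrow> add_pow \<O> n \<one>\<^bsub>\<O>\<^esub> \<noteq> \<zero>\<^bsub>\<O>\<^esub>)"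

definition residue_char :: "('o, 'p) ring_scheme \<Rightarrow> nat \<Rightarrow> bool" where
  "residue_char \<O> p \<longleftrightarrow> Factorial_Ring.prime p \<and> add_pow \<O> p \<one>\<^bsub>\<O>\<^esub> \<in> dvr_max_ideal \<O>"

definition algebra_over :: "('o, 'p) ring_scheme \<Rightarrow> ('a, 'm) ring_scheme \<Rightarrow> ('o \<Rightarrow> 'a) \<Rightarrow> bool" where
  "algebra_over \<O> L \<phi> \<longleftrightarrow> ring L \<and> \<phi> \<in> ring_hom \<O> L \<and>
     (\<forall>c\<in>carrier \<O>. \<forall>x\<in>carrier L. \<phi> c \<otimes>\<^bsub>L\<^esub> x = x \<otimes>\<^bsub>L\<^esub> \<phi> c)"

definition O_order :: "('o, 'p) ring_scheme \<Rightarrow> ('a, 'm) ring_scheme \<Rightarrow> ('o \<Rightarrow> 'a) \<Rightarrow> bool" where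
  "O_order \<O> L \<phi> \<longleftrightarrow> algebra_over \<O> L \<phi> \<and>
     (\<exists>(n::nat) b. b \<in> {..<n} \<rightarrow> carrier L \<and>
        (\<forall>x\<in>carrier L. \<exists>!c. c \<in> {..<n} \<rightarrow>\<^sub>E carrier \<O> \<and>
             x = finsum L (\<lambda>i. \<phi> (c i) \<otimes>\<^bsub>L\<^esub> b i) {..<n}))"

definition group_graded :: "('a, 'm) ring_scheme \<Rightarrow> ('g, 'n) monoid_scheme \<Rightarrow> ('g \<Rightarrow> 'a set) \<Rightarrow> bool" where
  "group_graded A G Gr \<longleftrightarrow> ring A \<and> group G \<and>
     (\<forall>g\<in>carrier G. additive_subgroup (Gr g) A) \<and>
     (\<forall>g\<in>carrier G. \<forall>h\<in>carrier G. \<forall>x\<in>Gr g. \<forall>y\<in>Gr h. x \<otimes>\<^bsub>A\<^esub> y \<in> Gr (g \<otimes>\<^bsub>G\<^esub> h)) \<and>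
     (\<forall>x\<in>carrier A. \<exists>!f. f \<in> (\<Pi>\<^sub>E g\<in>carrier G. Gr g) \<and>
          finite {g\<in>carrier G. f g \<noteq> \<zero>\<^bsub>A\<^esub>} \<and>
          x = finsum A f {g\<in>carrier G. f g \<noteq> \<zero>\<^bsub>A\<^esub>})"

definition crossed_product :: "('a, 'm) ring_scheme \<Rightarrow> ('a, 'm) ring_scheme \<Rightarrow>
    ('g, 'n) monoid_scheme \<Rightarrow> ('g \<Rightarrow> 'a set) \<Rightarrow> bool" where
  "crossed_product A R G Gr \<longleftrightarrow> group_graded A G Gr \<and>
     R = A\<lparr>carrier := Gr \<one>\<^bsub>G\<^esub>\<rparr> \<and>
     (\<forall>g\<in>carrier G. Gr g \<inter> Units A \<noteq> {})"

definition linear_crossed_product :: "('o, 'p) ring_scheme \<Rightarrow> ('o \<Rightarrow> 'a) \<Rightarrow>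
    ('a, 'm) ring_scheme \<Rightarrow> ('a, 'm) ring_scheme \<Rightarrow>
    ('g, 'n) monoid_scheme \<Rightarrow> ('g \<Rightarrow> 'a set) \<Rightarrow> bool" where
  "linear_crossed_product \<O> \<phi> A R G Gr \<longleftrightarrow> crossed_product A R G Gr \<and>
     algebra_over \<O> R \<phi> \<and>
     (\<forall>c\<in>carrier \<O>. \<forall>x\<in>carrier A. \<phi> c \<otimes>\<^bsub>A\<^esub> x = x \<otimes>\<^bsub>A\<^esub> \<phi> c)"

definition O_automorphisms :: "('o, 'p) ring_scheme \<Rightarrow> ('a, 'm) ring_scheme \<Rightarrow> ('o \<Rightarrow> 'a) \<Rightarrow> ('a \<Rightarrow> 'a) set" where
  "O_automorphisms \<O> L \<phi> = {\<alpha>. \<alpha> \<in> ring_iso L L \<and>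
     (\<forall>c\<in>carrier \<O>. \<forall>x\<in>carrier L. \<alpha> (\<phi> c \<otimes>\<^bsub>L\<^esub> x) = \<phi> c \<otimes>\<^bsub>L\<^esub> \<alpha> x)}"

definition right_ideal_gen :: "('a, 'm) ring_scheme \<Rightarrow> 'a \<Rightarrow> 'a set" where
  "right_ideal_gen L a = (\<lambda>x. a \<otimes>\<^bsub>L\<^esub> x) ` carrier L"

definition right_module_iso :: "('a, 'm) ring_scheme \<Rightarrow> 'a set \<Rightarrow> 'a set \<Rightarrow> bool" where
  "right_module_iso L M N \<longleftrightarrow> (\<exists>f. bij_betw f M N \<and>
     (\<forall>x\<in>M. \<forall>y\<in>M. f (x \<oplus>\<^bsub>L\<^esub> y) = f x \<oplus>\<^bsub>L\<^esub> f y) \<and>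
     (\<forall>x\<in>M. \<forall>r\<in>carrier L. f (x \<otimes>\<^bsub>L\<^esub> r) = f x \<otimes>\<^bsub>L\<^esub> r))"

definition corner :: "('a, 'm) ring_scheme \<Rightarrow> 'a \<Rightarrow> ('a, 'm) ring_scheme" where
  "corner A e = A\<lparr>carrier := (\<lambda>x. e \<otimes>\<^bsub>A\<^esub> x \<otimes>\<^bsub>A\<^esub> e) ` carrier A, one := e\<rparr>"

end

theory Submission
  imports Defs
begin

lemma corner_simps[simp]:
  "carrier (corner R e) = (\<lambda>x. e \<otimes>\<^bsub>R\<^esub> x \<otimes>\<^bsub>R\<^esub> e) ` carrier R"
  "monoid.mult (corner R e) = monoid.mult R" "ring.add (corner R e) = ring.add R"
  "ring.zero (corner R e) = ring.zero R" "monoid.one (corner R e) = e"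
  by (simp_all add: corner_def)

lemma corner_memD:
  fixes R (structure)
  assumes "ring R" "e \<in> carrier R" "e \<otimes> e = e" "x \<in> carrier (corner R e)"
  shows "x \<in> carrier R" "e \<otimes> x = x" "x \<otimes> e = x"
proof -
  interpret ring R by fact
  from assms(4) obtain y where y: "y \<in> carrier R" "x = e \<otimes> y \<otimes> e" by auto
  show "x \<in> carrier R" using y assms by simp
  have "e \<otimes> x = (e \<otimes> e) \<otimes> y \<otimes> e" using y assms(2) by (simp add: m_assoc)
  then show "e \<otimes> x = x" using y assms(3) by simp
  have "x \<otimes> e = e \<otimes> y \<otimes> (e \<otimes> e)" using y assms(2) by (simp add: m_assoc)
  then show "x \<otimes> e = x" using y assms(3) by simp
qed

lemma corner_memI:
  fixes R (structure)
  assumes "x \<in> carrier R" "e \<otimes> x = x" "x \<otimes> e = x"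
  shows "x \<in> carrier (corner R e)"
  using assms by (auto intro!: image_eqI[where x=x])

lemma corner_ring:
  fixes R (structure)
  assumes "ring R" "e \<in> carrier R" "e \<otimes> e = e"
  shows "ring (corner R e)"
proof -
  interpret ring R by fact
  note D = corner_memD[OF assms]
  note I = corner_memI[of _ R e]
  show ?thesis
  proof (rule ringI)
    show "abelian_group (corner R e)"
    proof (rule abelian_groupI)
      fix x y assume hx: "x \<in> carrier (corner R e)" and hy: "y \<in> carrier (corner R e)"
      show "x \<oplus>\<^bsub>corner R e\<^esub> y \<in> carrier (corner R e)"
        using D[OF hx] D[OF hy] assms by (intro I) (simp_all add: l_distr r_distr)
    next
      show "\<zero>\<^bsub>corner R e\<^esub> \<in> carrier (corner R e)" using assms by (intro I) simp_all
    next
      fix x y z assume hx: "x \<in> carrier (corner R e)" and hy: "y \<in> carrier (corner R e)" and hz: "z \<in> carrier (corner R e)"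
      show "x \<oplus>\<^bsub>corner R e\<^esub> y \<oplus>\<^bsub>corner R e\<^esub> z = x \<oplus>\<^bsub>corner R e\<^esub> (y \<oplus>\<^bsub>corner R e\<^esub> z)"
        using D[OF hx] D[OF hy] D[OF hz] by (simp add: a_assoc)
    next
      fix x y assume hx: "x \<in> carrier (corner R e)" and hy: "y \<in> carrier (corner R e)"
      show "x \<oplus>\<^bsub>corner R e\<^esub> y = y \<oplus>\<^bsub>corner R e\<^esub> x"
        using D[OF hx] D[OF hy] by (simp add: a_comm)
    next
      fix x assume hx: "x \<in> carrier (corner R e)"
      show "\<zero>\<^bsub>corner R e\<^esub> \<oplus>\<^bsub>corner R e\<^esub> x = x" using D[OF hx] by simp
    next
      fix x assume hx: "x \<in> carrier (corner R e)"
      have "\<ominus> x \<in> carrier (corner R e)" using D[OF hx] assms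
        by (intro I) (simp_all add: l_minus r_minus)
      then show "\<exists>y\<in>carrier (corner R e). y \<oplus>\<^bsub>corner R e\<^esub> x = \<zero>\<^bsub>corner R e\<^esub>"
        using D[OF hx] by (intro bexI[where x="\<ominus> x"]) (auto simp: l_neg)
    qed
  next
    show "monoid (corner R e)"
    proof (rule monoidI)
      fix x y assume hx: "x \<in> carrier (corner R e)" and hy: "y \<in> carrier (corner R e)"
      show "x \<otimes>\<^bsub>corner R e\<^esub> y \<in> carrier (corner R e)"
      proof (unfold corner_simps(2), rule I)
        show "e \<otimes> (x \<otimes> y) = x \<otimes> y" using D[OF hx] D[OF hy] assms by (simp add: m_assoc[symmetric])
        show "x \<otimes> y \<otimes> e = x \<otimes> y" using D[OF hx] D[OF hy] assms by (simp add: m_assoc)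
      qed (use D[OF hx] D[OF hy] in simp)
    next
      show "\<one>\<^bsub>corner R e\<^esub> \<in> carrier (corner R e)" using assms by (intro I) simp_all
    next
      fix x y z assume hx: "x \<in> carrier (corner R e)" and hy: "y \<in> carrier (corner R e)" and hz: "z \<in> carrier (corner R e)"
      show "x \<otimes>\<^bsub>corner R e\<^esub> y \<otimes>\<^bsub>corner R e\<^esub> z = x \<otimes>\<^bsub>corner R e\<^esub> (y \<otimes>\<^bsub>corner R e\<^esub> z)"
        using D[OF hx] D[OF hy] D[OF hz] by (simp add: m_assoc)
    next
      fix x assume hx: "x \<in> carrier (corner R e)"
      show "\<one>\<^bsub>corner R e\<^esub> \<otimes>\<^bsub>corner R e\<^esub> x = x" using D[OF hx] by simp
    next
      fix x assume hx: "x \<in> carrier (corner R e)"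
      show "x \<otimes>\<^bsub>corner R e\<^esub> \<one>\<^bsub>corner R e\<^esub> = x" using D[OF hx] by simp
    qed
  next
    fix x y z assume hx: "x \<in> carrier (corner R e)" and hy: "y \<in> carrier (corner R e)" and hz: "z \<in> carrier (corner R e)"
    show "(x \<oplus>\<^bsub>corner R e\<^esub> y) \<otimes>\<^bsub>corner R e\<^esub> z = x \<otimes>\<^bsub>corner R e\<^esub> z \<oplus>\<^bsub>corner R e\<^esub> y \<otimes>\<^bsub>corner R e\<^esub> z"
      using D[OF hx] D[OF hy] D[OF hz] by (simp add: l_distr)
  next
    fix x y z assume hx: "x \<in> carrier (corner R e)" and hy: "y \<in> carrier (corner R e)" and hz: "z \<in> carrier (corner R e)"
    show "z \<otimes>\<^bsub>corner R e\<^esub> (x \<oplus>\<^bsub>corner R e\<^esub> y) = z \<otimes>\<^bsub>corner R e\<^esub> x \<oplus>\<^bsub>corner R e\<^esub> z \<otimes>\<^bsub>corner R e\<^esub> y"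
      using D[OF hx] D[OF hy] D[OF hz] by (simp add: r_distr)
  qed
qed



lemma graded_unit_inv:
  fixes A (structure) and G :: "('g, 'n) monoid_scheme"
  assumes gg: "group_graded A G Gr" and one1: "\<one> \<in> Gr \<one>\<^bsub>G\<^esub>"
    and g: "g \<in> carrier G" and u: "u \<in> Gr g" "u \<in> Units A"
  shows "inv u \<in> Gr (inv\<^bsub>G\<^esub> g)"
proof -
  interpret ring A using gg by (simp add: group_graded_def)
  interpret G: group G using gg by (simp add: group_graded_def)
  have sub: "\<And>h. h \<in> carrier G \<Longrightarrow> additive_subgroup (Gr h) A" using gg by (simp add: group_graded_def)
  have sub_c: "\<And>h. h \<in> carrier G \<Longrightarrow> Gr h \<subseteq> carrier A" using sub additive_subgroup.a_subset by blast
  have zero_in: "\<And>h. h \<in> carrier G \<Longrightarrow> \<zero> \<in> Gr h" using sub additive_subgroup.zero_closed by blast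
  have mul: "\<And>g h x y. g \<in> carrier G \<Longrightarrow> h \<in> carrier G \<Longrightarrow> x \<in> Gr g \<Longrightarrow> y \<in> Gr h \<Longrightarrow> x \<otimes> y \<in> Gr (g \<otimes>\<^bsub>G\<^esub> h)"
    using gg by (simp add: group_graded_def)
  have uniq: "\<And>x. x \<in> carrier A \<Longrightarrow> \<exists>!f. f \<in> (\<Pi>\<^sub>E g\<in>carrier G. Gr g) \<and>
          finite {g\<in>carrier G. f g \<noteq> \<zero>} \<and> x = finsum A f {g\<in>carrier G. f g \<noteq> \<zero>}"
    using gg by (simp add: group_graded_def)
  define v where "v = inv u"
  have v: "v \<in> carrier A" "u \<otimes> v = \<one>" "v \<otimes> u = \<one>" using u by (simp_all add: v_def)
  have uc: "u \<in> carrier A" using u by blast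
  have ig: "inv\<^bsub>G\<^esub> g \<in> carrier G" using g by simp
  show ?thesis
  proof (cases "\<one> = \<zero>")
    case True
    have "v = v \<otimes> \<one>" using v by simp
    also have "\<dots> = \<zero>" using True v by simp
    finally show ?thesis using zero_in[OF ig] by (simp add: v_def)
  next
    case False
    from uniq[OF v(1)] obtain f where f: "f \<in> (\<Pi>\<^sub>E g\<in>carrier G. Gr g)"
      "finite {g\<in>carrier G. f g \<noteq> \<zero>}" "v = finsum A f {g\<in>carrier G. f g \<noteq> \<zero>}" by blast
    define S where "S = {g\<in>carrier G. f g \<noteq> \<zero>}"
    have fc: "\<And>h. h \<in> carrier G \<Longrightarrow> f h \<in> carrier A" using f(1) sub_c by blast
    have uz: "\<And>z. z \<in> carrier A \<Longrightarrow> u \<otimes> z = \<zero> \<Longrightarrow> z = \<zero>"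
    proof -
      fix z assume z: "z \<in> carrier A" "u \<otimes> z = \<zero>"
      have "z = (v \<otimes> u) \<otimes> z" using v z by simp
      also have "\<dots> = v \<otimes> (u \<otimes> z)" using v(1) uc z(1) by (rule m_assoc)
      finally show "z = \<zero>" using z v by simp
    qed
    define F where "F = (\<lambda>k. if k \<in> carrier G then u \<otimes> f (inv\<^bsub>G\<^esub> g \<otimes>\<^bsub>G\<^esub> k) else undefined)"
    define F1 where "F1 = (\<lambda>k. if k \<in> carrier G then (if k = \<one>\<^bsub>G\<^esub> then \<one> else \<zero>) else undefined)"
    have F_Pi: "F \<in> (\<Pi>\<^sub>E g\<in>carrier G. Gr g)"
    proof
      fix k assume k: "k \<in> carrier G"
      have "u \<otimes> f (inv\<^bsub>G\<^esub> g \<otimes>\<^bsub>G\<^esub> k) \<in> Gr (g \<otimes>\<^bsub>G\<^esub> (inv\<^bsub>G\<^esub> g \<otimes>\<^bsub>G\<^esub> k))"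
        using mul[OF g _ u(1), of "inv\<^bsub>G\<^esub> g \<otimes>\<^bsub>G\<^esub> k" "f (inv\<^bsub>G\<^esub> g \<otimes>\<^bsub>G\<^esub> k)"] f(1) k ig
        by (meson G.m_closed PiE_mem)
      then show "F k \<in> Gr k" using k g by (simp add: F_def G.m_assoc[symmetric])
    qed (simp add: F_def)
    have suppF: "{k\<in>carrier G. F k \<noteq> \<zero>} = (\<lambda>h. g \<otimes>\<^bsub>G\<^esub> h) ` S"
    proof (intro Set.set_eqI iffI)
      fix k assume "k \<in> {k\<in>carrier G. F k \<noteq> \<zero>}"
      then have k: "k \<in> carrier G" "u \<otimes> f (inv\<^bsub>G\<^esub> g \<otimes>\<^bsub>G\<^esub> k) \<noteq> \<zero>" by (auto simp: F_def)
      then have "f (inv\<^bsub>G\<^esub> g \<otimes>\<^bsub>G\<^esub> k) \<noteq> \<zero>" using uc fc ig by auto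
      then have "inv\<^bsub>G\<^esub> g \<otimes>\<^bsub>G\<^esub> k \<in> S" using k ig by (simp add: S_def)
      moreover have "k = g \<otimes>\<^bsub>G\<^esub> (inv\<^bsub>G\<^esub> g \<otimes>\<^bsub>G\<^esub> k)" using k g by (simp add: G.m_assoc[symmetric])
      ultimately show "k \<in> (\<lambda>h. g \<otimes>\<^bsub>G\<^esub> h) ` S" by blast
    next
      fix k assume "k \<in> (\<lambda>h. g \<otimes>\<^bsub>G\<^esub> h) ` S"
      then obtain h where h: "h \<in> carrier G" "f h \<noteq> \<zero>" "k = g \<otimes>\<^bsub>G\<^esub> h" by (auto simp: S_def)
      have "inv\<^bsub>G\<^esub> g \<otimes>\<^bsub>G\<^esub> k = h" using h g by (simp add: G.m_assoc[symmetric])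
      then have "F k = u \<otimes> f h" using h g by (simp add: F_def)
      then have "F k \<noteq> \<zero>" using uz fc h by metis
      then show "k \<in> {k\<in>carrier G. F k \<noteq> \<zero>}" using h g by simp
    qed
    have finS: "finite S" using f(2) by (simp add: S_def)
    have injS: "inj_on (\<lambda>h. g \<otimes>\<^bsub>G\<^esub> h) S" using g by (auto simp: S_def inj_on_def)
    have FPi2: "F \<in> (\<lambda>h. g \<otimes>\<^bsub>G\<^esub> h) ` S \<rightarrow> carrier A"
      using F_Pi sub_c g by (force simp: S_def)
    have "finsum A F {k\<in>carrier G. F k \<noteq> \<zero>} = finsum A (\<lambda>h. F (g \<otimes>\<^bsub>G\<^esub> h)) S"
      unfolding suppF by (rule finsum_reindex[OF FPi2 injS])
    also have "\<dots> = finsum A (\<lambda>h. u \<otimes> f h) S"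
    proof (rule finsum_cong')
      show "\<And>h. h \<in> S \<Longrightarrow> F (g \<otimes>\<^bsub>G\<^esub> h) = u \<otimes> f h"
        using g by (auto simp: S_def F_def G.m_assoc[symmetric])
      show "(\<lambda>h. u \<otimes> f h) \<in> S \<rightarrow> carrier A" using uc fc by (auto simp: S_def)
    qed simp
    also have "\<dots> = u \<otimes> v" using f(3) finS uc fc by (simp add: S_def finsum_rdistr Pi_def)
    also have "\<dots> = \<one>" using v by simp
    finally have sumF: "\<one> = finsum A F {k\<in>carrier G. F k \<noteq> \<zero>}" by simp
    have suppF1: "{k\<in>carrier G. F1 k \<noteq> \<zero>} = {\<one>\<^bsub>G\<^esub>}" using False by (auto simp: F1_def)
    have F1_Pi: "F1 \<in> (\<Pi>\<^sub>E g\<in>carrier G. Gr g)" using one1 zero_in by (auto simp: F1_def)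
    have sumF1: "\<one> = finsum A F1 {k\<in>carrier G. F1 k \<noteq> \<zero>}"
      unfolding suppF1 by (simp add: F1_def)
    have finF: "finite {k\<in>carrier G. F k \<noteq> \<zero>}" unfolding suppF using finS by simp
    have "F = F1"
      using uniq[OF one_closed] F_Pi finF sumF F1_Pi suppF1 sumF1 by auto
    have Ssub: "S \<subseteq> {inv\<^bsub>G\<^esub> g}"
    proof
      fix h assume hS: "h \<in> S"
      then have h: "h \<in> carrier G" "f h \<noteq> \<zero>" by (auto simp: S_def)
      show "h \<in> {inv\<^bsub>G\<^esub> g}"
      proof (rule ccontr)
        assume "h \<notin> {inv\<^bsub>G\<^esub> g}"
        then have ne: "g \<otimes>\<^bsub>G\<^esub> h \<noteq> \<one>\<^bsub>G\<^esub>" using h g G.inv_equality G.m_closed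
          by (metis G.inv_char G.inv_closed G.l_inv G.m_assoc G.l_one G.inv_inv singletonI)
        have "F (g \<otimes>\<^bsub>G\<^esub> h) = \<zero>" using \<open>F = F1\<close> ne h g by (simp add: F1_def)
        moreover have "F (g \<otimes>\<^bsub>G\<^esub> h) = u \<otimes> f h" using h g by (simp add: F_def G.m_assoc[symmetric])
        ultimately show False using uz fc h by metis
      qed
    qed
    show ?thesis
    proof (cases "S = {}")
      case True
      have "v = finsum A f S" using f(3) by (simp add: S_def)
      with True have "v = \<zero>" by simp
      then show ?thesis using zero_in[OF ig] by (simp add: v_def)
    next
      case False
      then have "S = {inv\<^bsub>G\<^esub> g}" using Ssub by blast
      then have "v = f (inv\<^bsub>G\<^esub> g)" using f(3) fc ig by (simp add: S_def[symmetric])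
      then show ?thesis using f(1) ig by (auto simp: v_def)
    qed
  qed
qed



lemma finsum_corner:
  fixes A (structure)
  assumes "ring A" "e \<in> carrier A" "e \<otimes> e = e" "finite I" "f \<in> I \<rightarrow> carrier (corner A e)"
  shows "finsum (corner A e) f I = finsum A f I"
  using assms(4,5)
proof (induction I rule: finite_induct)
  case empty
  interpret C: ring "corner A e" using corner_ring[OF assms(1-3)] .
  interpret ring A by fact
  show ?case by simp
next
  case (insert i I)
  interpret C: ring "corner A e" using corner_ring[OF assms(1-3)] .
  interpret ring A by fact
  have fc: "\<And>x. x \<in> insert i I \<Longrightarrow> f x \<in> carrier A"
    using insert(4) corner_memD(1)[OF assms(1-3)] by blast
  have "finsum (corner A e) f (insert i I) = f i \<oplus>\<^bsub>corner A e\<^esub> finsum (corner A e) f I"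
    using insert by (intro C.finsum_insert) auto
  also have "\<dots> = f i \<oplus> finsum A f I" using insert by simp
  also have "\<dots> = finsum A f (insert i I)"
    using insert fc by (intro finsum_insert[symmetric]) auto
  finally show ?case .
qed

lemma graded_corner:
  fixes A (structure) and G :: "('g, 'n) monoid_scheme"
  assumes gg: "group_graded A G Gr" and e: "e \<in> Gr \<one>\<^bsub>G\<^esub>" "e \<otimes> e = e"
  shows "group_graded (corner A e) G (\<lambda>g. (\<lambda>x. e \<otimes> x \<otimes> e) ` Gr g)"
proof -
  interpret ring A using gg by (simp add: group_graded_def)
  interpret G: group G using gg by (simp add: group_graded_def)
  have sub: "\<And>h. h \<in> carrier G \<Longrightarrow> additive_subgroup (Gr h) A" using gg by (simp add: group_graded_def)
  have sub_c: "\<And>h. h \<in> carrier G \<Longrightarrow> Gr h \<subseteq> carrier A" using sub additive_subgroup.a_subset by blast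
  have mul: "\<And>g h x y. g \<in> carrier G \<Longrightarrow> h \<in> carrier G \<Longrightarrow> x \<in> Gr g \<Longrightarrow> y \<in> Gr h \<Longrightarrow> x \<otimes> y \<in> Gr (g \<otimes>\<^bsub>G\<^esub> h)"
    using gg by (simp add: group_graded_def)
  have uniq: "\<And>x. x \<in> carrier A \<Longrightarrow> \<exists>!f. f \<in> (\<Pi>\<^sub>E g\<in>carrier G. Gr g) \<and>
          finite {g\<in>carrier G. f g \<noteq> \<zero>} \<and> x = finsum A f {g\<in>carrier G. f g \<noteq> \<zero>}"
    using gg by (simp add: group_graded_def)
  have ec: "e \<in> carrier A" using e sub_c by blast
  have ee: "\<And>w. w \<in> carrier A \<Longrightarrow> e \<otimes> (e \<otimes> w) = e \<otimes> w" using ec e(2) by (simp add: m_assoc[symmetric])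
  interpret C: ring "corner A e" by (rule corner_ring[OF ring_axioms ec e(2)])
  note D = corner_memD[OF ring_axioms ec e(2)]
  have cm: "\<And>x. x \<in> carrier A \<Longrightarrow> e \<otimes> x \<otimes> e \<in> carrier (corner A e)" by auto
  define Gr' where "Gr' = (\<lambda>g. (\<lambda>x. e \<otimes> x \<otimes> e) ` Gr g)"
  have Gr'_sub: "\<And>g. g \<in> carrier G \<Longrightarrow> Gr' g \<subseteq> Gr g"
  proof
    fix g y assume g: "g \<in> carrier G" and "y \<in> Gr' g"
    then obtain x where x: "x \<in> Gr g" "y = e \<otimes> x \<otimes> e" by (auto simp: Gr'_def)
    have "e \<otimes> x \<in> Gr (\<one>\<^bsub>G\<^esub> \<otimes>\<^bsub>G\<^esub> g)" using mul[OF _ g e(1) x(1)] by simp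
    then have "e \<otimes> x \<otimes> e \<in> Gr (\<one>\<^bsub>G\<^esub> \<otimes>\<^bsub>G\<^esub> g \<otimes>\<^bsub>G\<^esub> \<one>\<^bsub>G\<^esub>)" using mul[OF _ _ _ e(1)] g by simp
    then show "y \<in> Gr g" using g x by simp
  qed
  have Gr'_sub2: "\<And>g. g \<in> carrier G \<Longrightarrow> Gr' g \<subseteq> carrier (corner A e)"
    using sub_c by (auto simp: Gr'_def)
  have addsub: "additive_subgroup (Gr' g) (corner A e)" if g: "g \<in> carrier G" for g
  proof (rule additive_subgroupI, rule C.add.subgroupI)
    show "Gr' g \<subseteq> carrier (corner A e)" using Gr'_sub2[OF g] .
    show "Gr' g \<noteq> {}" using additive_subgroup.zero_closed[OF sub[OF g]] by (auto simp: Gr'_def)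
  next
    fix a assume "a \<in> Gr' g"
    then obtain x where x: "x \<in> Gr g" "a = e \<otimes> x \<otimes> e" by (auto simp: Gr'_def)
    have xc: "x \<in> carrier A" using x sub_c g by blast
    have "\<ominus>\<^bsub>corner A e\<^esub> a = e \<otimes> (\<ominus> x) \<otimes> e"
    proof (rule C.minus_equality)
      show "e \<otimes> \<ominus> x \<otimes> e \<oplus>\<^bsub>corner A e\<^esub> a = \<zero>\<^bsub>corner A e\<^esub>"
        using x xc ec by (simp add: l_minus r_minus l_neg)
      show "a \<in> carrier (corner A e)" using x xc by simp
      show "e \<otimes> \<ominus> x \<otimes> e \<in> carrier (corner A e)" using xc by (intro cm) simp
    qed
    then show "\<ominus>\<^bsub>corner A e\<^esub> a \<in> Gr' g"
      using additive_subgroup.a_inv_closed[OF sub[OF g] x(1)] by (auto simp: Gr'_def)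
  next
    fix a b assume "a \<in> Gr' g" "b \<in> Gr' g"
    then obtain x y where x: "x \<in> Gr g" "a = e \<otimes> x \<otimes> e" and y: "y \<in> Gr g" "b = e \<otimes> y \<otimes> e"
      by (auto simp: Gr'_def)
    have xc: "x \<in> carrier A" "y \<in> carrier A" using x y sub_c g by blast+
    have "a \<oplus>\<^bsub>corner A e\<^esub> b = e \<otimes> (x \<oplus> y) \<otimes> e"
      using x y xc ec by (simp add: l_distr r_distr)
    then show "a \<oplus>\<^bsub>corner A e\<^esub> b \<in> Gr' g"
      using additive_subgroup.a_closed[OF sub[OF g] x(1) y(1)] by (auto simp: Gr'_def)
  qed
  have mul': "x \<otimes>\<^bsub>corner A e\<^esub> y \<in> Gr' (g \<otimes>\<^bsub>G\<^esub> h)"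
    if g: "g \<in> carrier G" and h: "h \<in> carrier G" and xy: "x \<in> Gr' g" "y \<in> Gr' h" for g h x y
  proof -
    obtain x' y' where x: "x' \<in> Gr g" "x = e \<otimes> x' \<otimes> e" and y: "y' \<in> Gr h" "y = e \<otimes> y' \<otimes> e"
      using xy by (auto simp: Gr'_def)
    have xc: "x' \<in> carrier A" "y' \<in> carrier A" using x y sub_c g h by blast+
    have "x' \<otimes> e \<in> Gr (g \<otimes>\<^bsub>G\<^esub> \<one>\<^bsub>G\<^esub>)" using mul[OF g _ x(1) e(1)] by simp
    then have "x' \<otimes> e \<otimes> y' \<in> Gr (g \<otimes>\<^bsub>G\<^esub> \<one>\<^bsub>G\<^esub> \<otimes>\<^bsub>G\<^esub> h)" using mul[OF _ h _ y(1)] g by simp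
    then have z: "x' \<otimes> e \<otimes> y' \<in> Gr (g \<otimes>\<^bsub>G\<^esub> h)" using g by simp
    have "x \<otimes>\<^bsub>corner A e\<^esub> y = e \<otimes> (x' \<otimes> e \<otimes> y') \<otimes> e"
      using x y xc ec by (simp add: m_assoc ee)
    then show ?thesis using z by (auto simp: Gr'_def)
  qed
  have decomp: "\<exists>!f. f \<in> (\<Pi>\<^sub>E g\<in>carrier G. Gr' g) \<and>
          finite {g\<in>carrier G. f g \<noteq> \<zero>\<^bsub>corner A e\<^esub>} \<and>
          x = finsum (corner A e) f {g\<in>carrier G. f g \<noteq> \<zero>\<^bsub>corner A e\<^esub>}"
    if x: "x \<in> carrier (corner A e)" for x
  proof -
    have xc: "x \<in> carrier A" "e \<otimes> x = x" "x \<otimes> e = x" using D[OF x] by auto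
    have imp: "f \<in> (\<Pi>\<^sub>E g\<in>carrier G. Gr g) \<and> finite {g\<in>carrier G. f g \<noteq> \<zero>} \<and>
          x = finsum A f {g\<in>carrier G. f g \<noteq> \<zero>}"
      if f: "f \<in> (\<Pi>\<^sub>E g\<in>carrier G. Gr' g) \<and>
          finite {g\<in>carrier G. f g \<noteq> \<zero>\<^bsub>corner A e\<^esub>} \<and>
          x = finsum (corner A e) f {g\<in>carrier G. f g \<noteq> \<zero>\<^bsub>corner A e\<^esub>}" for f
    proof -
      have "f \<in> (\<Pi>\<^sub>E g\<in>carrier G. Gr g)" using f Gr'_sub by (auto simp: PiE_def Pi_def)
      moreover have "finsum (corner A e) f {g\<in>carrier G. f g \<noteq> \<zero>} = finsum A f {g\<in>carrier G. f g \<noteq> \<zero>}"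
      proof (rule finsum_corner[OF ring_axioms ec e(2)])
        show "finite {g\<in>carrier G. f g \<noteq> \<zero>}" using f by simp
        have "f \<in> carrier G \<rightarrow> carrier (corner A e)" using f Gr'_sub2 unfolding PiE_def Pi_def by blast
        then show "f \<in> {g\<in>carrier G. f g \<noteq> \<zero>} \<rightarrow> carrier (corner A e)" by auto
      qed
      ultimately show ?thesis using f by simp
    qed
    obtain f where f: "f \<in> (\<Pi>\<^sub>E g\<in>carrier G. Gr g)" "finite {g\<in>carrier G. f g \<noteq> \<zero>}"
      "x = finsum A f {g\<in>carrier G. f g \<noteq> \<zero>}" using uniq[OF xc(1)] by blast
    define S where "S = {g\<in>carrier G. f g \<noteq> \<zero>}"
    have fc: "\<And>h. h \<in> carrier G \<Longrightarrow> f h \<in> carrier A" using f(1) sub_c by blast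
    define F where "F = (\<lambda>g. if g \<in> carrier G then e \<otimes> f g \<otimes> e else undefined)"
    have FPi: "F \<in> (\<Pi>\<^sub>E g\<in>carrier G. Gr' g)" using f(1) by (auto simp: F_def Gr'_def)
    have supp: "{g\<in>carrier G. F g \<noteq> \<zero>} \<subseteq> S" using fc ec by (auto simp: F_def S_def)
    have finS: "finite S" using f(2) by (simp add: S_def)
    have Fc: "F \<in> S \<rightarrow> carrier A" using fc ec by (auto simp: F_def S_def)
    have "finsum (corner A e) F {g\<in>carrier G. F g \<noteq> \<zero>} = finsum A F {g\<in>carrier G. F g \<noteq> \<zero>}"
    proof (rule finsum_corner[OF ring_axioms ec e(2)])
      show "finite {g\<in>carrier G. F g \<noteq> \<zero>}" using supp finS by (rule finite_subset)
      have "F \<in> carrier G \<rightarrow> carrier (corner A e)" using FPi Gr'_sub2 unfolding PiE_def Pi_def by blast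
      then show "F \<in> {g\<in>carrier G. F g \<noteq> \<zero>} \<rightarrow> carrier (corner A e)" by auto
    qed
    also have "\<dots> = finsum A F S"
      by (rule add.finprod_mono_neutral_cong_left[OF finS supp _ _ Fc]) (auto simp: S_def)
    also have "\<dots> = finsum A (\<lambda>g. e \<otimes> f g \<otimes> e) S"
      by (rule finsum_cong') (use fc ec in \<open>auto simp: F_def S_def\<close>)
    also have "\<dots> = e \<otimes> finsum A f S \<otimes> e"
      using finS fc ec by (simp add: finsum_ldistr finsum_rdistr S_def Pi_def)
    also have "\<dots> = x" using f(3) xc by (simp add: S_def)
    finally have Fsum: "x = finsum (corner A e) F {g\<in>carrier G. F g \<noteq> \<zero>\<^bsub>corner A e\<^esub>}" by simp
    have P: "F \<in> (\<Pi>\<^sub>E g\<in>carrier G. Gr' g) \<and>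
          finite {g\<in>carrier G. F g \<noteq> \<zero>\<^bsub>corner A e\<^esub>} \<and>
          x = finsum (corner A e) F {g\<in>carrier G. F g \<noteq> \<zero>\<^bsub>corner A e\<^esub>}"
      using FPi Fsum supp finS by (auto intro: finite_subset)
    show ?thesis
    proof (rule ex1I[of _ F])
      show "F \<in> (\<Pi>\<^sub>E g\<in>carrier G. Gr' g) \<and>
          finite {g\<in>carrier G. F g \<noteq> \<zero>\<^bsub>corner A e\<^esub>} \<and>
          x = finsum (corner A e) F {g\<in>carrier G. F g \<noteq> \<zero>\<^bsub>corner A e\<^esub>}" by (rule P)
      fix F' assume "F' \<in> (\<Pi>\<^sub>E g\<in>carrier G. Gr' g) \<and>
          finite {g\<in>carrier G. F' g \<noteq> \<zero>\<^bsub>corner A e\<^esub>} \<and>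
          x = finsum (corner A e) F' {g\<in>carrier G. F' g \<noteq> \<zero>\<^bsub>corner A e\<^esub>}"
      from imp[OF this] imp[OF P] uniq[OF xc(1)] show "F' = F" by blast
    qed
  qed
  have "group_graded (corner A e) G Gr'"
    unfolding group_graded_def
  proof (intro conjI ballI)
    show "ring (corner A e)" by (rule C.ring_axioms)
    show "group G" by (rule G.group_axioms)
  next
    fix g assume "g \<in> carrier G" then show "additive_subgroup (Gr' g) (corner A e)" by (rule addsub)
  next
    fix g h x y assume "g \<in> carrier G" "h \<in> carrier G" "x \<in> Gr' g" "y \<in> Gr' h"
    then show "x \<otimes>\<^bsub>corner A e\<^esub> y \<in> Gr' (g \<otimes>\<^bsub>G\<^esub> h)" by (rule mul')
  next
    fix x assume "x \<in> carrier (corner A e)"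
    then show "\<exists>!f. f \<in> (\<Pi>\<^sub>E g\<in>carrier G. Gr' g) \<and>
          finite {g\<in>carrier G. f g \<noteq> \<zero>\<^bsub>corner A e\<^esub>} \<and>
          x = finsum (corner A e) f {g\<in>carrier G. f g \<noteq> \<zero>\<^bsub>corner A e\<^esub>}" by (rule decomp)
  qed
  then show ?thesis by (simp add: Gr'_def)
qed



lemma prop_aux:
  fixes \<O> :: "('o, 'p) ring_scheme" and p :: nat
    and \<Gamma> :: "('a, 'm) ring_scheme" (structure) and G :: "('g, 'n) monoid_scheme"
    and Gr :: "'g \<Rightarrow> 'a set" and \<phi> :: "'o \<Rightarrow> 'a" and e :: 'a
  assumes "complete_DVR \<O>" and "char_zero_ring \<O>" and "residue_char \<O> p"
    and "O_order \<O> (\<Gamma>\<lparr>carrier := Gr \<one>\<^bsub>G\<^esub>\<rparr>) \<phi>"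
    and "finite (carrier G)"
    and "linear_crossed_product \<O> \<phi> \<Gamma> (\<Gamma>\<lparr>carrier := Gr \<one>\<^bsub>G\<^esub>\<rparr>) G Gr"
    and "e \<in> Gr \<one>\<^bsub>G\<^esub>" and "e \<otimes>\<^bsub>\<Gamma>\<^esub> e = e"
    and "\<forall>\<alpha>\<in>O_automorphisms \<O> (\<Gamma>\<lparr>carrier := Gr \<one>\<^bsub>G\<^esub>\<rparr>) \<phi>.
           right_module_iso (\<Gamma>\<lparr>carrier := Gr \<one>\<^bsub>G\<^esub>\<rparr>)
             (right_ideal_gen (\<Gamma>\<lparr>carrier := Gr \<one>\<^bsub>G\<^esub>\<rparr>) e)
             (right_ideal_gen (\<Gamma>\<lparr>carrier := Gr \<one>\<^bsub>G\<^esub>\<rparr>) (\<alpha> e))"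
  shows "linear_crossed_product \<O> (\<lambda>c. \<phi> c \<otimes>\<^bsub>\<Gamma>\<^esub> e)
           (corner \<Gamma> e) (corner (\<Gamma>\<lparr>carrier := Gr \<one>\<^bsub>G\<^esub>\<rparr>) e) G
           (\<lambda>g. (\<lambda>x. e \<otimes>\<^bsub>\<Gamma>\<^esub> x \<otimes>\<^bsub>\<Gamma>\<^esub> e) ` Gr g)"
proof -
  let ?L = "\<Gamma>\<lparr>carrier := Gr \<one>\<^bsub>G\<^esub>\<rparr>"
  define Gr' where "Gr' = (\<lambda>g. (\<lambda>x. e \<otimes>\<^bsub>\<Gamma>\<^esub> x \<otimes>\<^bsub>\<Gamma>\<^esub> e) ` Gr g)"
  have cp: "crossed_product \<Gamma> ?L G Gr" and alg: "algebra_over \<O> ?L \<phi>"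
    and cen: "\<And>c x. c \<in> carrier \<O> \<Longrightarrow> x \<in> carrier \<Gamma> \<Longrightarrow> \<phi> c \<otimes>\<^bsub>\<Gamma>\<^esub> x = x \<otimes>\<^bsub>\<Gamma>\<^esub> \<phi> c"
    using assms(6) by (auto simp: linear_crossed_product_def)
  have gg: "group_graded \<Gamma> G Gr" and units: "\<And>g. g \<in> carrier G \<Longrightarrow> Gr g \<inter> Units \<Gamma> \<noteq> {}"
    using cp by (auto simp: crossed_product_def)
  interpret ring \<Gamma> using gg by (simp add: group_graded_def)
  interpret G: group G using gg by (simp add: group_graded_def)
  have ringL: "ring ?L" and phi: "\<phi> \<in> ring_hom \<O> ?L" using alg by (auto simp: algebra_over_def)
  have one1: "\<one> \<in> Gr \<one>\<^bsub>G\<^esub>" using ring.ring_simprules(6)[OF ringL] by simp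
  have sub: "\<And>h. h \<in> carrier G \<Longrightarrow> additive_subgroup (Gr h) \<Gamma>" using gg by (simp add: group_graded_def)
  have sub_c: "\<And>h. h \<in> carrier G \<Longrightarrow> Gr h \<subseteq> carrier \<Gamma>" using sub additive_subgroup.a_subset by blast
  have mul: "\<And>g h x y. g \<in> carrier G \<Longrightarrow> h \<in> carrier G \<Longrightarrow> x \<in> Gr g \<Longrightarrow> y \<in> Gr h \<Longrightarrow> x \<otimes> y \<in> Gr (g \<otimes>\<^bsub>G\<^esub> h)"
    using gg by (simp add: group_graded_def)
  have mul1: "\<And>x y. x \<in> Gr \<one>\<^bsub>G\<^esub> \<Longrightarrow> y \<in> Gr \<one>\<^bsub>G\<^esub> \<Longrightarrow> x \<otimes> y \<in> Gr \<one>\<^bsub>G\<^esub>"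
    using mul[of "\<one>\<^bsub>G\<^esub>" "\<one>\<^bsub>G\<^esub>"] by simp
  have G1c: "Gr \<one>\<^bsub>G\<^esub> \<subseteq> carrier \<Gamma>" using sub_c by simp
  have ec: "e \<in> carrier \<Gamma>" using assms(7) G1c by blast
  have phic: "\<And>c. c \<in> carrier \<O> \<Longrightarrow> \<phi> c \<in> Gr \<one>\<^bsub>G\<^esub>"
    using ring_hom_closed[OF phi] by simp
  have ee: "\<And>w. w \<in> carrier \<Gamma> \<Longrightarrow> e \<otimes> (e \<otimes> w) = e \<otimes> w"
    using ec assms(8) by (simp add: m_assoc[symmetric])
  note D = corner_memD[OF ring_axioms ec assms(8)]
  note I = corner_memI[of _ \<Gamma> e]
  have GG: "group_graded (corner \<Gamma> e) G Gr'"
    unfolding Gr'_def by (rule graded_corner[OF gg assms(7,8)])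
  have receq: "corner ?L e = (corner \<Gamma> e)\<lparr>carrier := Gr' \<one>\<^bsub>G\<^esub>\<rparr>"
    by (simp add: corner_def Gr'_def)
  have unitsC: "Gr' g \<inter> Units (corner \<Gamma> e) \<noteq> {}" if g: "g \<in> carrier G" for g
  proof -
    obtain u where u: "u \<in> Gr g" "u \<in> Units \<Gamma>" using units[OF g] by blast
    define v where "v = inv u"
    have ig: "inv\<^bsub>G\<^esub> g \<in> carrier G" using g by simp
    have vG: "v \<in> Gr (inv\<^bsub>G\<^esub> g)" unfolding v_def by (rule graded_unit_inv[OF gg one1 g u])
    have uc: "u \<in> carrier \<Gamma>" using u by blast
    have vc: "v \<in> carrier \<Gamma>" "u \<otimes> v = \<one>" "v \<otimes> u = \<one>" using u by (simp_all add: v_def)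
    have uv: "\<And>w. w \<in> carrier \<Gamma> \<Longrightarrow> u \<otimes> (v \<otimes> w) = w" using uc vc by (simp add: m_assoc[symmetric])
    have vu: "\<And>w. w \<in> carrier \<Gamma> \<Longrightarrow> v \<otimes> (u \<otimes> w) = w" using uc vc by (simp add: m_assoc[symmetric])
    define \<alpha> where "\<alpha> = (\<lambda>x. u \<otimes> x \<otimes> v)"
    have \<alpha>L: "\<alpha> x \<in> Gr \<one>\<^bsub>G\<^esub>" if x: "x \<in> Gr \<one>\<^bsub>G\<^esub>" for x
    proof -
      have "u \<otimes> x \<in> Gr (g \<otimes>\<^bsub>G\<^esub> \<one>\<^bsub>G\<^esub>)" by (rule mul[OF g _ u(1) x]) simp
      then have "u \<otimes> x \<in> Gr g" using g by simp
      then have "u \<otimes> x \<otimes> v \<in> Gr (g \<otimes>\<^bsub>G\<^esub> inv\<^bsub>G\<^esub> g)" by (rule mul[OF g ig _ vG])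
      then show ?thesis using g by (simp add: \<alpha>_def)
    qed
    have \<beta>L: "v \<otimes> x \<otimes> u \<in> Gr \<one>\<^bsub>G\<^esub>" if x: "x \<in> Gr \<one>\<^bsub>G\<^esub>" for x
    proof -
      have "v \<otimes> x \<in> Gr (inv\<^bsub>G\<^esub> g \<otimes>\<^bsub>G\<^esub> \<one>\<^bsub>G\<^esub>)" by (rule mul[OF ig _ vG x]) simp
      then have "v \<otimes> x \<in> Gr (inv\<^bsub>G\<^esub> g)" using ig by simp
      then have "v \<otimes> x \<otimes> u \<in> Gr (inv\<^bsub>G\<^esub> g \<otimes>\<^bsub>G\<^esub> g)" by (rule mul[OF ig g _ u(1)])
      then show ?thesis using g by simp
    qed
    have aut: "\<alpha> \<in> O_automorphisms \<O> ?L \<phi>"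
    proof -
      have hom: "\<alpha> \<in> ring_hom ?L ?L"
      proof (rule ring_hom_memI)
        show "\<And>x. x \<in> carrier ?L \<Longrightarrow> \<alpha> x \<in> carrier ?L" using \<alpha>L by simp
      next
        fix x y assume "x \<in> carrier ?L" "y \<in> carrier ?L"
        then have xy: "x \<in> carrier \<Gamma>" "y \<in> carrier \<Gamma>" using G1c by auto
        show "\<alpha> (x \<otimes>\<^bsub>?L\<^esub> y) = \<alpha> x \<otimes>\<^bsub>?L\<^esub> \<alpha> y"
          using xy uc vc by (simp add: \<alpha>_def m_assoc vu)
      next
        fix x y assume "x \<in> carrier ?L" "y \<in> carrier ?L"
        then have xy: "x \<in> carrier \<Gamma>" "y \<in> carrier \<Gamma>" using G1c by auto
        show "\<alpha> (x \<oplus>\<^bsub>?L\<^esub> y) = \<alpha> x \<oplus>\<^bsub>?L\<^esub> \<alpha> y"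
          using xy uc vc by (simp add: \<alpha>_def l_distr r_distr)
      next
        show "\<alpha> \<one>\<^bsub>?L\<^esub> = \<one>\<^bsub>?L\<^esub>" using uc vc by (simp add: \<alpha>_def)
      qed
      have bij: "bij_betw \<alpha> (carrier ?L) (carrier ?L)"
      proof (rule bij_betwI[where g="\<lambda>x. v \<otimes> x \<otimes> u"])
        show "\<alpha> \<in> carrier ?L \<rightarrow> carrier ?L" using \<alpha>L by simp
        show "(\<lambda>x. v \<otimes> x \<otimes> u) \<in> carrier ?L \<rightarrow> carrier ?L" using \<beta>L by simp
        fix x assume "x \<in> carrier ?L"
        then have x: "x \<in> carrier \<Gamma>" using G1c by auto
        show "v \<otimes> \<alpha> x \<otimes> u = x" using x uc vc by (simp add: \<alpha>_def m_assoc vu)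
      next
        fix x assume "x \<in> carrier ?L"
        then have x: "x \<in> carrier \<Gamma>" using G1c by auto
        show "\<alpha> (v \<otimes> x \<otimes> u) = x" using x uc vc by (simp add: \<alpha>_def m_assoc uv)
      qed
      have lin: "\<forall>c\<in>carrier \<O>. \<forall>x\<in>carrier ?L. \<alpha> (\<phi> c \<otimes>\<^bsub>?L\<^esub> x) = \<phi> c \<otimes>\<^bsub>?L\<^esub> \<alpha> x"
      proof (intro ballI)
        fix c x assume c: "c \<in> carrier \<O>" and "x \<in> carrier ?L"
        then have x: "x \<in> carrier \<Gamma>" using G1c by auto
        have pc: "\<phi> c \<in> carrier \<Gamma>" using phic[OF c] G1c by blast
        have "\<alpha> (\<phi> c \<otimes> x) = (u \<otimes> \<phi> c) \<otimes> x \<otimes> v" using pc x uc vc by (simp add: \<alpha>_def m_assoc)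
        also have "\<dots> = (\<phi> c \<otimes> u) \<otimes> x \<otimes> v" using cen[OF c uc] by simp
        also have "\<dots> = \<phi> c \<otimes> \<alpha> x" using pc x uc vc by (simp add: \<alpha>_def m_assoc)
        finally show "\<alpha> (\<phi> c \<otimes>\<^bsub>?L\<^esub> x) = \<phi> c \<otimes>\<^bsub>?L\<^esub> \<alpha> x" by simp
      qed
      show ?thesis using hom bij lin by (simp add: O_automorphisms_def ring_iso_def)
    qed
    define f0 where "f0 = \<alpha> e"
    have f0G: "f0 \<in> Gr \<one>\<^bsub>G\<^esub>" using \<alpha>L[OF assms(7)] by (simp add: f0_def)
    have f0c: "f0 \<in> carrier \<Gamma>" using f0G G1c by blast
    have f0f0: "f0 \<otimes> f0 = f0"
    proof -
      have "f0 \<otimes> f0 = u \<otimes> (e \<otimes> (v \<otimes> (u \<otimes> (e \<otimes> v))))" using uc vc ec by (simp add: f0_def \<alpha>_def m_assoc)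
      also have "\<dots> = u \<otimes> ((e \<otimes> e) \<otimes> v)" using uc vc ec by (simp add: vu m_assoc)
      finally show ?thesis using assms(8) uc vc ec by (simp add: f0_def \<alpha>_def m_assoc)
    qed
    define E where "E = (\<lambda>x. e \<otimes> x) ` Gr \<one>\<^bsub>G\<^esub>"
    define Fm where "Fm = (\<lambda>x. f0 \<otimes> x) ` Gr \<one>\<^bsub>G\<^esub>"
    have "right_module_iso ?L (right_ideal_gen ?L e) (right_ideal_gen ?L (\<alpha> e))"
      using assms(9) aut by blast
    then obtain Fi where Fi: "bij_betw Fi E Fm"
      "\<And>x r. x \<in> E \<Longrightarrow> r \<in> Gr \<one>\<^bsub>G\<^esub> \<Longrightarrow> Fi (x \<otimes> r) = Fi x \<otimes> r"
    proof -
      from \<open>right_module_iso ?L (right_ideal_gen ?L e) (right_ideal_gen ?L (\<alpha> e))\<close>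
      obtain Fi where Fi: "bij_betw Fi E Fm" "\<forall>x\<in>E. \<forall>r\<in>Gr \<one>\<^bsub>G\<^esub>. Fi (x \<otimes> r) = Fi x \<otimes> r"
        unfolding right_module_iso_def right_ideal_gen_def E_def Fm_def f0_def by auto
      then show ?thesis using that by blast
    qed
    have EG: "E \<subseteq> Gr \<one>\<^bsub>G\<^esub>" using mul1 assms(7) by (auto simp: E_def)
    have eE: "e \<in> E" using assms(7,8) by (auto simp: E_def intro!: image_eqI[where x=e])
    have f0Fm: "f0 \<in> Fm" using f0G f0f0 by (auto simp: Fm_def intro!: image_eqI[where x=f0])
    have Eclos: "\<And>x r. x \<in> E \<Longrightarrow> r \<in> Gr \<one>\<^bsub>G\<^esub> \<Longrightarrow> x \<otimes> r \<in> E"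
    proof -
      fix x r assume "x \<in> E" "r \<in> Gr \<one>\<^bsub>G\<^esub>"
      then obtain s where s: "s \<in> Gr \<one>\<^bsub>G\<^esub>" "x = e \<otimes> s" and r: "r \<in> Gr \<one>\<^bsub>G\<^esub>" by (auto simp: E_def)
      have "x \<otimes> r = e \<otimes> (s \<otimes> r)" by (simp add: s(2) m_assoc ec subsetD[OF G1c s(1)] subsetD[OF G1c r])
      then show "x \<otimes> r \<in> E" using mul1[OF s(1) r] by (auto simp: E_def)
    qed
    have Fmf0: "\<And>y. y \<in> Fm \<Longrightarrow> f0 \<otimes> y = y"
    proof -
      fix y assume "y \<in> Fm"
      then obtain s where s: "s \<in> Gr \<one>\<^bsub>G\<^esub>" "y = f0 \<otimes> s" by (auto simp: Fm_def)
      show "f0 \<otimes> y = y" using f0f0 by (simp add: s(2) m_assoc[symmetric] f0c subsetD[OF G1c s(1)])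
    qed
    have Ee: "\<And>y. y \<in> E \<Longrightarrow> e \<otimes> y = y"
    proof -
      fix y assume "y \<in> E"
      then obtain s where s: "s \<in> Gr \<one>\<^bsub>G\<^esub>" "y = e \<otimes> s" by (auto simp: E_def)
      show "e \<otimes> y = y" using assms(8) by (simp add: s(2) m_assoc[symmetric] ec subsetD[OF G1c s(1)])
    qed
    have inj: "inj_on Fi E" and img: "Fi ` E = Fm" using Fi(1) by (auto simp: bij_betw_def)
    define a where "a = Fi e"
    have aFm: "a \<in> Fm" using eE img by (auto simp: a_def)
    obtain b where bE: "b \<in> E" and Fb: "Fi b = f0" using f0Fm img by (metis imageE)
    have aG: "a \<in> Gr \<one>\<^bsub>G\<^esub>" using aFm f0G mul1 by (auto simp: Fm_def)
    have bG: "b \<in> Gr \<one>\<^bsub>G\<^esub>" using bE EG by blast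
    have ac: "a \<in> carrier \<Gamma>" and bc: "b \<in> carrier \<Gamma>" using aG bG G1c by auto
    have ae: "a \<otimes> e = a" using Fi(2)[OF eE assms(7)] assms(8) by (simp add: a_def)
    have f0a: "f0 \<otimes> a = a" using Fmf0[OF aFm] .
    have eb: "e \<otimes> b = b" using Ee[OF bE] .
    have ba: "b \<otimes> a = e"
    proof -
      have "Fi (b \<otimes> a) = Fi e" using Fi(2)[OF bE aG] Fb f0a by (simp add: a_def)
      then show ?thesis using inj Eclos[OF bE aG] eE by (auto dest: inj_onD)
    qed
    have ab: "a \<otimes> b = f0"
    proof -
      have "Fi (e \<otimes> b) = a \<otimes> b" using Fi(2)[OF eE bG] by (simp add: a_def)
      then show ?thesis using eb Fb by simp
    qed
    have bf0: "b \<otimes> f0 = b"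
    proof -
      have "Fi (b \<otimes> f0) = Fi b" using Fi(2)[OF bE f0G] Fb f0f0 by simp
      then show ?thesis using inj Eclos[OF bE f0G] bE by (auto dest: inj_onD)
    qed
    define x where "x = b \<otimes> u"
    define y where "y = v \<otimes> a"
    have xc: "x \<in> carrier \<Gamma>" and yc: "y \<in> carrier \<Gamma>" using bc uc vc ac by (simp_all add: x_def y_def)
    have ex: "e \<otimes> x = x" using eb bc uc ec by (simp add: x_def m_assoc[symmetric])
    have xe: "x \<otimes> e = x"
    proof -
      have "x = b \<otimes> f0 \<otimes> u" using bf0 by (simp add: x_def)
      also have "\<dots> = b \<otimes> (u \<otimes> (e \<otimes> (v \<otimes> u)))" using bc uc vc ec by (simp add: f0_def \<alpha>_def m_assoc)
      also have "\<dots> = x \<otimes> e" using bc uc vc ec by (simp add: x_def m_assoc)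
      finally show ?thesis by simp
    qed
    have ye: "y \<otimes> e = y" using ae ac vc ec by (simp add: y_def m_assoc)
    have ey: "e \<otimes> y = y"
    proof -
      have "e \<otimes> v = v \<otimes> f0" using uc vc ec by (simp add: f0_def \<alpha>_def m_assoc vu)
      then have "e \<otimes> y = v \<otimes> (f0 \<otimes> a)" using vc ec ac f0c by (simp add: y_def m_assoc[symmetric])
      then show ?thesis using f0a by (simp add: y_def)
    qed
    have xG: "x \<in> Gr g" using mul[OF _ g bG u(1)] g by (simp add: x_def)
    have xGr': "x \<in> Gr' g" using ex xe xc xG by (auto simp: Gr'_def intro!: image_eqI[where x=x] m_assoc)
    have xy: "x \<otimes> y = e"
    proof -
      have "x \<otimes> y = b \<otimes> (u \<otimes> (v \<otimes> a))" using bc uc vc ac by (simp add: x_def y_def m_assoc)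
      then show ?thesis using uv[OF ac] ba by simp
    qed
    have yx: "y \<otimes> x = e"
    proof -
      have "y \<otimes> x = v \<otimes> ((a \<otimes> b) \<otimes> u)" using bc uc vc ac by (simp add: x_def y_def m_assoc)
      also have "\<dots> = v \<otimes> (u \<otimes> (e \<otimes> (v \<otimes> u)))" using ab uc vc ec by (simp add: f0_def \<alpha>_def m_assoc)
      also have "\<dots> = e" using uc vc ec by (simp add: vu)
      finally show ?thesis .
    qed
    have xC: "x \<in> carrier (corner \<Gamma> e)" by (rule I[OF xc ex xe])
    have yC: "y \<in> carrier (corner \<Gamma> e)" by (rule I[OF yc ey ye])
    have "x \<in> Units (corner \<Gamma> e)"
      unfolding Units_def
    proof (intro CollectI conjI bexI)
      show "x \<in> carrier (corner \<Gamma> e)" by (rule xC)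
      show "y \<in> carrier (corner \<Gamma> e)" by (rule yC)
      show "y \<otimes>\<^bsub>corner \<Gamma> e\<^esub> x = \<one>\<^bsub>corner \<Gamma> e\<^esub>" using yx by (simp only: corner_simps)
      show "x \<otimes>\<^bsub>corner \<Gamma> e\<^esub> y = \<one>\<^bsub>corner \<Gamma> e\<^esub>" using xy by (simp only: corner_simps)
    qed
    then show ?thesis using xGr' by blast
  qed
  have algC: "algebra_over \<O> (corner ?L e) (\<lambda>c. \<phi> c \<otimes> e)"
  proof -
    have eL: "e \<in> carrier ?L" "e \<otimes>\<^bsub>?L\<^esub> e = e" using assms(7,8) by simp_all
    have rc: "ring (corner ?L e)" by (rule corner_ring[OF ringL eL])
    have pc: "\<And>c. c \<in> carrier \<O> \<Longrightarrow> \<phi> c \<in> carrier \<Gamma>" using phic G1c by blast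
    have pe: "\<And>c. c \<in> carrier \<O> \<Longrightarrow> e \<otimes> \<phi> c = \<phi> c \<otimes> e" using cen ec by metis
    have DL: "\<And>x. x \<in> carrier (corner ?L e) \<Longrightarrow> x \<in> Gr \<one>\<^bsub>G\<^esub> \<and> e \<otimes> x = x \<and> x \<otimes> e = x"
    proof -
      fix x assume hx: "x \<in> carrier (corner ?L e)"
      have "x \<in> carrier ?L" "e \<otimes>\<^bsub>?L\<^esub> x = x" "x \<otimes>\<^bsub>?L\<^esub> e = x"
        using corner_memD[OF ringL eL hx] by blast+
      then show "x \<in> Gr \<one>\<^bsub>G\<^esub> \<and> e \<otimes> x = x \<and> x \<otimes> e = x" by simp
    qed
    have hom: "(\<lambda>c. \<phi> c \<otimes> e) \<in> ring_hom \<O> (corner ?L e)"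
    proof (rule ring_hom_memI)
      fix c assume c: "c \<in> carrier \<O>"
      show "\<phi> c \<otimes> e \<in> carrier (corner ?L e)"
      proof (rule corner_memI)
        show "\<phi> c \<otimes> e \<in> carrier ?L" using mul1[OF phic[OF c] assms(7)] by simp
        show "e \<otimes>\<^bsub>?L\<^esub> (\<phi> c \<otimes> e) = \<phi> c \<otimes> e"
          using pe[OF c] pc[OF c] ec assms(8) by (simp add: m_assoc[symmetric]) (simp add: m_assoc)
        show "\<phi> c \<otimes> e \<otimes>\<^bsub>?L\<^esub> e = \<phi> c \<otimes> e"
          using pc[OF c] ec assms(8) by (simp add: m_assoc)
      qed
    next
      fix c d assume c: "c \<in> carrier \<O>" and d: "d \<in> carrier \<O>"
      have "\<phi> (c \<otimes>\<^bsub>\<O>\<^esub> d) = \<phi> c \<otimes> \<phi> d" using ring_hom_mult[OF phi c d] by simp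
      moreover have "\<phi> c \<otimes> \<phi> d \<otimes> e = (\<phi> c \<otimes> e) \<otimes> (\<phi> d \<otimes> e)"
      proof -
        have "(\<phi> c \<otimes> e) \<otimes> (\<phi> d \<otimes> e) = \<phi> c \<otimes> (e \<otimes> \<phi> d) \<otimes> e"
          using pc[OF c] pc[OF d] ec by (simp add: m_assoc)
        also have "\<dots> = \<phi> c \<otimes> \<phi> d \<otimes> (e \<otimes> e)"
          using pe[OF d] pc[OF c] pc[OF d] ec by (simp add: m_assoc)
        finally show ?thesis using assms(8) by simp
      qed
      ultimately show "\<phi> (c \<otimes>\<^bsub>\<O>\<^esub> d) \<otimes> e = (\<phi> c \<otimes> e) \<otimes>\<^bsub>corner ?L e\<^esub> (\<phi> d \<otimes> e)" by simp
    next
      fix c d assume c: "c \<in> carrier \<O>" and d: "d \<in> carrier \<O>"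
      have "\<phi> (c \<oplus>\<^bsub>\<O>\<^esub> d) = \<phi> c \<oplus> \<phi> d" using ring_hom_add[OF phi c d] by simp
      then show "\<phi> (c \<oplus>\<^bsub>\<O>\<^esub> d) \<otimes> e = (\<phi> c \<otimes> e) \<oplus>\<^bsub>corner ?L e\<^esub> (\<phi> d \<otimes> e)"
        using pc[OF c] pc[OF d] ec by (simp add: l_distr)
    next
      have "\<phi> \<one>\<^bsub>\<O>\<^esub> = \<one>" using ring_hom_one[OF phi] by simp
      then show "\<phi> \<one>\<^bsub>\<O>\<^esub> \<otimes> e = \<one>\<^bsub>corner ?L e\<^esub>" using ec by simp
    qed
    have "\<forall>c\<in>carrier \<O>. \<forall>x\<in>carrier (corner ?L e). (\<phi> c \<otimes> e) \<otimes>\<^bsub>corner ?L e\<^esub> x = x \<otimes>\<^bsub>corner ?L e\<^esub> (\<phi> c \<otimes> e)"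
    proof (intro ballI)
      fix c x assume c: "c \<in> carrier \<O>" and x: "x \<in> carrier (corner ?L e)"
      have xc: "x \<in> carrier \<Gamma>" "e \<otimes> x = x" "x \<otimes> e = x" using DL[OF x] G1c by auto
      have pc: "\<phi> c \<in> carrier \<Gamma>" using pc[OF c] .
      have "(\<phi> c \<otimes> e) \<otimes> x = \<phi> c \<otimes> x" using xc pc ec by (simp add: m_assoc)
      also have "\<dots> = x \<otimes> \<phi> c" using cen[OF c xc(1)] .
      also have "\<dots> = (x \<otimes> e) \<otimes> \<phi> c" using xc by simp
      also have "\<dots> = x \<otimes> (\<phi> c \<otimes> e)" using xc(1) pc ec by (simp add: m_assoc cen[OF c ec, symmetric])
      finally show "(\<phi> c \<otimes> e) \<otimes>\<^bsub>corner ?L e\<^esub> x = x \<otimes>\<^bsub>corner ?L e\<^esub> (\<phi> c \<otimes> e)" by simp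
    qed
    then show ?thesis using rc hom by (simp add: algebra_over_def)
  qed
  have cenC: "\<forall>c\<in>carrier \<O>. \<forall>x\<in>carrier (corner \<Gamma> e). (\<phi> c \<otimes> e) \<otimes>\<^bsub>corner \<Gamma> e\<^esub> x = x \<otimes>\<^bsub>corner \<Gamma> e\<^esub> (\<phi> c \<otimes> e)"
  proof (intro ballI)
    fix c x assume c: "c \<in> carrier \<O>" and x: "x \<in> carrier (corner \<Gamma> e)"
    have xc: "x \<in> carrier \<Gamma>" "e \<otimes> x = x" "x \<otimes> e = x" using D[OF x] by auto
    have pc: "\<phi> c \<in> carrier \<Gamma>" using phic[OF c] G1c by blast
    have "(\<phi> c \<otimes> e) \<otimes> x = \<phi> c \<otimes> x" using xc pc ec by (simp add: m_assoc)
    also have "\<dots> = x \<otimes> \<phi> c" using cen[OF c xc(1)] .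
    also have "\<dots> = (x \<otimes> e) \<otimes> \<phi> c" using xc by simp
    also have "\<dots> = x \<otimes> (\<phi> c \<otimes> e)" using xc(1) pc ec by (simp add: m_assoc cen[OF c ec, symmetric])
    finally show "(\<phi> c \<otimes> e) \<otimes>\<^bsub>corner \<Gamma> e\<^esub> x = x \<otimes>\<^bsub>corner \<Gamma> e\<^esub> (\<phi> c \<otimes> e)" by simp
  qed
  have "crossed_product (corner \<Gamma> e) (corner ?L e) G Gr'"
    unfolding crossed_product_def using GG receq unitsC by simp
  then have "linear_crossed_product \<O> (\<lambda>c. \<phi> c \<otimes> e) (corner \<Gamma> e) (corner ?L e) G Gr'"
    unfolding linear_crossed_product_def using algC cenC by simp
  then show ?thesis by (simp add: Gr'_def)
qed


theorem proposition4p15: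
  fixes \<O> :: "('o, 'p) ring_scheme" and p :: nat
    and \<Gamma> :: "('a, 'm) ring_scheme" and G :: "('g, 'n) monoid_scheme"
    and Gr :: "'g \<Rightarrow> 'a set" and \<phi> :: "'o \<Rightarrow> 'a" and e :: 'a
  assumes "complete_DVR \<O>" and "char_zero_ring \<O>" and "residue_char \<O> p"
    and "O_order \<O> (\<Gamma>\<lparr>carrier := Gr \<one>\<^bsub>G\<^esub>\<rparr>) \<phi>"
    and "finite (carrier G)"
    and "linear_crossed_product \<O> \<phi> \<Gamma> (\<Gamma>\<lparr>carrier := Gr \<one>\<^bsub>G\<^esub>\<rparr>) G Gr"
    and "e \<in> Gr \<one>\<^bsub>G\<^esub>" and "e \<otimes>\<^bsub>\<Gamma>\<^esub> e = e"
    and "\<forall>\<alpha>\<in>O_automorphisms \<O> (\<Gamma>\<lparr>carrier := Gr \<one>\<^bsub>G\<^esub>\<rparr>) \<phi>.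
           right_module_iso (\<Gamma>\<lparr>carrier := Gr \<one>\<^bsub>G\<^esub>\<rparr>)
             (right_ideal_gen (\<Gamma>\<lparr>carrier := Gr \<one>\<^bsub>G\<^esub>\<rparr>) e)
             (right_ideal_gen (\<Gamma>\<lparr>carrier := Gr \<one>\<^bsub>G\<^esub>\<rparr>) (\<alpha> e))"
  shows "linear_crossed_product \<O> (\<lambda>c. \<phi> c \<otimes>\<^bsub>\<Gamma>\<^esub> e)
           (corner \<Gamma> e) (corner (\<Gamma>\<lparr>carrier := Gr \<one>\<^bsub>G\<^esub>\<rparr>) e) G
           (\<lambda>g. (\<lambda>x. e \<otimes>\<^bsub>\<Gamma>\<^esub> x \<otimes>\<^bsub>\<Gamma>\<^esub> e) ` Gr g)"
  using assms by (rule prop_aux)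


end
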